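(* Let $\mathfrak{plc}_I$ be a tropical plactic algebra with generators $\{\mathfrak a_i:i\in I\}$, and let $L_m=[\ell_1,\dots,\ell_m]$, $m\ge1$, be a sequence of indices in $I$ with $\mathfrak a_{\ell_1}\le \mathfrak a_{\ell_2}\le\cdots\le\mathfrak a_{\ell_m}$. Then $$\mathfrak a_{\ell_1}\cdots\mathfrak a_{\ell_m}=\sum_{S}\ \prod_{s\in S}\mathfrak a_s,$$ where the sum runs over all nonempty subsequences $S$ of $L_m$ (taken by positions, with the order of $L_m$ preserved in the product).
   Context: A tropical plactic algebra (troplactic algebra) $\mathfrak{plc}_I$ ($I\subseteq\mathbb N$ nonempty) is an idempotent semiring $(\mathfrak{plc}_I,+,\cdot)$ (addition commutative, associative, with $\mathfrak u+\mathfrak u=\mathfrak u$ for all $\mathfrak u$; multiplication associative, possibly noncommutative, with identity $\mathfrak e$; a zero $\mathfrak o$ which is the additive identity and multiplicatively absorbing; multiplication distributes over addition on both sides), generated as a semiring by a totally ordered set of elements $\{\mathfrak a_i: i\in I\}$, such that for all generators $\mathfrak a\le\mathfrak b\le\mathfrak c$: (TPA1) $\mathfrak a=\mathfrak e+\mathfrak a$; (TPA2) $\mathfrak b\mathfrak a=\mathfrak a+\mathfrak b$ when $\mathfrak b>\mathfrak a$; (TPA3) $\mathfrak a(\mathfrak b+\mathfrak c)=\mathfrak a\mathfrak b+\mathfrak c$; (TPA4) $(\mathfrak a+\mathfrak b)\mathfrak c=\mathfrak a+\mathfrak b\mathfrak c$. *)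

theory Defs
  imports Main
begin

inductive_set semiring_gen :: "('a \<Rightarrow> 'a \<Rightarrow> 'a) \<Rightarrow> ('a \<Rightarrow> 'a \<Rightarrow> 'a) \<Rightarrow> 'a \<Rightarrow> 'a \<Rightarrow> 'a set \<Rightarrow> 'a set"
  for add mult e z G where
  gen_base: "x \<in> G \<Longrightarrow> x \<in> semiring_gen add mult e z G"
| gen_one: "e \<in> semiring_gen add mult e z G"
| gen_zero: "z \<in> semiring_gen add mult e z G"
| gen_add: "x \<in> semiring_gen add mult e z G \<Longrightarrow> y \<in> semiring_gen add mult e z G
      \<Longrightarrow> add x y \<in> semiring_gen add mult e z G"
| gen_mult: "x \<in> semiring_gen add mult e z G \<Longrightarrow> y \<in> semiring_gen add mult e z G
      \<Longrightarrow> mult x y \<in> semiring_gen add mult e z G"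

text \<open>Tropical plactic algebra: carrier is the type 'a, addition add, multiplication mult,
  identity e, zero z, generators a i for i in I (I a nonempty subset of nat), totally
  ordered by their indices: a i \<le> a j iff i \<le> j.\<close>
definition troplactic ::
  "('a \<Rightarrow> 'a \<Rightarrow> 'a) \<Rightarrow> ('a \<Rightarrow> 'a \<Rightarrow> 'a) \<Rightarrow> 'a \<Rightarrow> 'a \<Rightarrow> nat set \<Rightarrow> (nat \<Rightarrow> 'a) \<Rightarrow> bool" where
  "troplactic add mult e z I a \<longleftrightarrow>
     I \<noteq> {} \<and>
     (\<forall>u v w. add (add u v) w = add u (add v w)) \<and>
     (\<forall>u v. add u v = add v u) \<and>
     (\<forall>u. add u u = u) \<and>
     (\<forall>u. add z u = u) \<and>
     (\<forall>u v w. mult (mult u v) w = mult u (mult v w)) \<and>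
     (\<forall>u. mult e u = u \<and> mult u e = u) \<and>
     (\<forall>u. mult z u = z \<and> mult u z = z) \<and>
     (\<forall>u v w. mult u (add v w) = add (mult u v) (mult u w)) \<and>
     (\<forall>u v w. mult (add u v) w = add (mult u w) (mult v w)) \<and>
     (\<forall>u. u \<in> semiring_gen add mult e z (a ` I)) \<and>
     inj_on a I \<and>
     (\<forall>i\<in>I. a i = add e (a i)) \<and>
     (\<forall>i\<in>I. \<forall>j\<in>I. i < j \<longrightarrow> mult (a j) (a i) = add (a i) (a j)) \<and>
     (\<forall>i\<in>I. \<forall>j\<in>I. \<forall>k\<in>I. i \<le> j \<longrightarrow> j \<le> k \<longrightarrow>
         mult (a i) (add (a j) (a k)) = add (mult (a i) (a j)) (a k)) \<and>
     (\<forall>i\<in>I. \<forall>j\<in>I. \<forall>k\<in>I. i \<le> j \<longrightarrow> j \<le> k \<longrightarrow>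
         mult (add (a i) (a j)) (a k) = add (a i) (mult (a j) (a k)))"

definition lsum :: "('a \<Rightarrow> 'a \<Rightarrow> 'a) \<Rightarrow> 'a \<Rightarrow> 'a list \<Rightarrow> 'a" where
  "lsum add z xs = foldr add xs z"

definition lprod :: "('a \<Rightarrow> 'a \<Rightarrow> 'a) \<Rightarrow> 'a \<Rightarrow> 'a list \<Rightarrow> 'a" where
  "lprod mult e xs = foldr mult xs e"

end

theory Submission
  imports Defs
begin

lemma lsum_append:
  assumes A: "\<forall>u v w. add (add u v) w = add u (add v w)" and Z: "\<forall>u. add z u = u"
  shows "lsum add z (xs @ ys) = add (lsum add z xs) (lsum add z ys)"
  using A Z by (induction xs) (auto simp: lsum_def)

lemma lsum_mult:
  assumes D: "\<forall>u v w. mult u (add v w) = add (mult u v) (mult u w)" and Z: "\<forall>u. mult u z = z"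
  shows "mult u (lsum add z (map f xs)) = lsum add z (map (\<lambda>x. mult u (f x)) xs)"
  using D Z by (induction xs) (auto simp: lsum_def)

lemma lsum_absorb:
  assumes A: "\<forall>u v w. add (add u v) w = add u (add v w)" and C: "\<forall>u v. add u v = add v u"
    and Id: "\<forall>u. add u u = u"
  shows "y \<in> set xs \<Longrightarrow> add y (lsum add z xs) = lsum add z xs"
proof (induction xs)
  case Nil then show ?case by simp
next
  case (Cons x xs)
  show ?case
  proof (cases "y = x")
    case True
    have "add x (add x (lsum add z xs)) = add (add x x) (lsum add z xs)" using A by simp
    then show ?thesis using True Id by (simp add: lsum_def)
  next
    case False
    then have "add y (lsum add z xs) = lsum add z xs" using Cons by simp
    moreover have "add y (add x (lsum add z xs)) = add x (add y (lsum add z xs))"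
      using A C by metis
    ultimately show ?thesis by (simp add: lsum_def)
  qed
qed

lemma filter_nil_subseqs: "filter (\<lambda>S. S = []) (subseqs L) = [[]]"
  by (induction L) (auto simp: Let_def filter_empty_conv)

lemma filter_split_sum:
  assumes A: "\<forall>u v w. add (add u v) w = add u (add v w)" and C: "\<forall>u v. add u v = add v u"
    and Z: "\<forall>u. add z u = u"
  shows "lsum add z (map f xs) = add (lsum add z (map f (filter P xs))) (lsum add z (map f (filter (\<lambda>x. \<not> P x) xs)))"
proof (induction xs)
  case Nil then show ?case using Z by (simp add: lsum_def)
next
  case (Cons x xs)
  have A': "\<And>u v w. add (add u v) w = add u (add v w)" using A by blast
  have C': "\<And>u v. add u v = add v u" using C by blast
  have LC: "\<And>u v w. add u (add v w) = add v (add u w)" using A' C' by metis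
  show ?case using Cons.IH by (simp add: lsum_def A' LC)
qed

theorem mainTheorem2:
  fixes add mult :: "'a \<Rightarrow> 'a \<Rightarrow> 'a" and e z :: 'a
    and I :: "nat set" and a :: "nat \<Rightarrow> 'a" and L :: "nat list"
  assumes "troplactic add mult e z I a"
    and "L \<noteq> []" and "set L \<subseteq> I" and "sorted L"
  shows "lprod mult e (map a L) =
    lsum add z (map (\<lambda>S. lprod mult e (map a S)) (filter (\<lambda>S. S \<noteq> []) (subseqs L)))"
proof -
  note T = assms(1)[unfolded troplactic_def]
  have A: "\<forall>u v w. add (add u v) w = add u (add v w)" using T by (elim conjE) assumption
  have C: "\<forall>u v. add u v = add v u" using T by (elim conjE) assumption
  have Id: "\<forall>u. add u u = u" using T by (elim conjE) assumption
  have Z: "\<forall>u. add z u = u" using T by (elim conjE) assumption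
  have E: "\<forall>u. mult e u = u \<and> mult u e = u" using T by (elim conjE) assumption
  have MZ: "\<forall>u. mult z u = z \<and> mult u z = z" using T by (elim conjE) assumption
  have DL: "\<forall>u v w. mult u (add v w) = add (mult u v) (mult u w)" using T by (elim conjE) assumption
  have DR: "\<forall>u v w. mult (add u v) w = add (mult u w) (mult v w)" using T by (elim conjE) assumption
  have G: "\<forall>i\<in>I. a i = add e (a i)" using T by (elim conjE) assumption
  have ZR: "\<forall>u. add u z = u" using Z C by metis
  have MZR: "\<forall>u. mult u z = z" using MZ by blast
  define F where "F = (\<lambda>S. lprod mult e (map a S))"
  have full: "set M \<subseteq> I \<Longrightarrow> lprod mult e (map a M) = lsum add z (map F (subseqs M))" for M
  proof (induction M)
    case Nil then show ?case using ZR by (simp add: lsum_def lprod_def F_def)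
  next
    case (Cons x xs)
    have IH: "lprod mult e (map a xs) = lsum add z (map F (subseqs xs))" using Cons by simp
    have xI: "x \<in> I" using Cons.prems by simp
    have gx: "a x = add e (a x)" using G xI by blast
    have "lsum add z (map F (subseqs (x # xs)))
       = add (lsum add z (map (\<lambda>S. mult (a x) (F S)) (subseqs xs))) (lsum add z (map F (subseqs xs)))"
      using lsum_append[OF A Z] by (simp add: Let_def o_def F_def lprod_def)
    also have "\<dots> = add (mult (a x) (lprod mult e (map a xs))) (lprod mult e (map a xs))"
      using lsum_mult[OF DL MZR, of "a x" F "subseqs xs"] IH by simp
    also have "\<dots> = mult (a x) (lprod mult e (map a xs))"
    proof -
      define P where "P = lprod mult e (map a xs)"
      have "mult (a x) P = mult (add e (a x)) P" using gx by (rule arg_cong[where f="\<lambda>t. mult t P"])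
      also have "\<dots> = add (mult e P) (mult (a x) P)" using DR by blast
      also have "\<dots> = add P (mult (a x) P)" using E by simp
      finally have "mult (a x) (lprod mult e (map a xs)) = add (lprod mult e (map a xs)) (mult (a x) (lprod mult e (map a xs)))"
        unfolding P_def .
      then show ?thesis using C by simp
    qed
    finally show ?case by (simp add: lprod_def)
  qed
  have split: "lsum add z (map F (subseqs L)) = add e (lsum add z (map F (filter (\<lambda>S. S \<noteq> []) (subseqs L))))"
    using filter_split_sum[OF A C Z, of F "subseqs L" "\<lambda>S. S = []"] filter_nil_subseqs[of L] Z ZR E
    by (simp add: lsum_def F_def lprod_def)
  obtain l ls where L: "L = l # ls" using assms(2) by (cases L) auto
  have lI: "l \<in> I" using assms(3) L by simp
  have "[l] \<in> set (filter (\<lambda>S. S \<noteq> []) (subseqs L))"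
  proof -
    have "[] \<in> set (subseqs ls)" by (induction ls) (auto simp: Let_def)
    then show ?thesis using L by (auto simp: Let_def)
  qed
  hence inset: "a l \<in> set (map F (filter (\<lambda>S. S \<noteq> []) (subseqs L)))"
  proof -
    have "F [l] = a l" using E by (simp add: F_def lprod_def)
    then show ?thesis using \<open>[l] \<in> _\<close> by (metis image_eqI list.set_map)
  qed
  define R where "R = lsum add z (map F (filter (\<lambda>S. S \<noteq> []) (subseqs L)))"
  have abs: "add (a l) R = R" unfolding R_def using lsum_absorb[OF A C Id] inset by blast
  have "add e R = R"
  proof -
    have "add e R = add e (add (a l) R)" using abs by simp
    also have "\<dots> = add (add e (a l)) R" using A by simp
    also have "\<dots> = R" using G lI abs by (metis (no_types))
    finally show ?thesis .
  qed
  then show ?thesis using full[OF assms(3)] split unfolding R_def F_def by simp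
qed

end
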